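(* Let $k\ge 1$, $V>0$, and $0\le A\le \frac{2V}{3k}$. Let $y_1,\dots,y_k$ be independent with $y_i\sim N(\mu_i,V+A)$ for known $\mu_i$, let $S_+=\sum_{i=1}^k(y_i-\mu_i)^2$ and $\hat A_{\mathrm{unb}}=S_+/k-V$. Then $P(\hat A_{\mathrm{unb}}<0)=P(\chi^2_k\le kB)>1/2$, where $B=V/(V+A)$. *)

theory Defs
  imports "HOL-Probability.Probability"
begin

definition chi_squared_density :: "nat \<Rightarrow> real \<Rightarrow> real" where
  "chi_squared_density k x =
     (if x > 0 then x powr (real k / 2 - 1) * exp (- x / 2) / (2 powr (real k / 2) * Gamma (real k / 2))
      else 0)"

definition chi_squared :: "nat \<Rightarrow> real measure" where
  "chi_squared k = density lborel (\<lambda>x. ennreal (chi_squared_density k x))"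

definition chi_squared_cdf :: "nat \<Rightarrow> real \<Rightarrow> real" where
  "chi_squared_cdf k t = measure (chi_squared k) {..t}"

end

theory Submission
  imports Defs
begin

lemma exp_cubic_lower:
  fixes s :: real assumes "s \<ge> 0"
  shows "1 + s + s^2/2 + s^3/6 \<le> exp s"
proof -
  obtain t where "exp s = (\<Sum>m<4. s ^ m / fact m) + exp t / fact 4 * s ^ 4"
    using Maclaurin_exp_le[of s 4] by blast
  moreover have "(\<Sum>m<4. s ^ m / fact m) = 1 + s + s^2/2 + s^3/6"
    by (simp add: numeral_eq_Suc fact_numeral)
  moreover have "exp t / fact 4 * s ^ 4 \<ge> 0" by simp
  ultimately show ?thesis by linarith
qed

definition psi :: "real \<Rightarrow> real" where "psi s = exp s - 1 - s"
definition tau :: "real \<Rightarrow> real" where "tau s = - s - 2/3 * psi s"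

lemma psi_nonneg: "psi s \<ge> 0"
  unfolding psi_def using exp_ge_add_one_self[of s] by linarith

lemma r_nonneg:
  fixes s :: real assumes "s \<ge> 0"
  shows "2 * (exp s)^2 + 8 * exp s - 10 - 4 * (2 * exp s + 1) * s \<ge> 0"
proof -
  have d1: "4 * (exp x)^2 - 8 * x * exp x - 4 \<ge> 0" if "x \<ge> 0" for x :: real
  proof -
    have "(\<lambda>x. 4 * (exp x)^2 - 8 * x * exp x - 4) 0 \<le> (\<lambda>x. 4 * (exp x)^2 - 8 * x * exp x - 4) x"
    proof (rule deriv_nonneg_imp_mono[where g' = "\<lambda>x. 8 * exp x * (exp x - 1 - x)" and g = "\<lambda>x. 4 * (exp x)^2 - 8 * x * exp x - 4"])
      fix z :: real assume "z \<in> {0..x}"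
      show "((\<lambda>x. 4 * (exp x)^2 - 8 * x * exp x - 4) has_real_derivative 8 * exp z * (exp z - 1 - z)) (at z)"
        by (auto intro!: derivative_eq_intros simp: algebra_simps power2_eq_square)
      show "8 * exp z * (exp z - 1 - z) \<ge> 0"
        using exp_ge_add_one_self[of z] by (intro mult_nonneg_nonneg) (auto simp: algebra_simps)
    qed (use that in auto)
    thus ?thesis by simp
  qed
  have "(\<lambda>x. 2 * (exp x)^2 + 8 * exp x - 10 - 4 * (2 * exp x + 1) * x) 0
        \<le> (\<lambda>x. 2 * (exp x)^2 + 8 * exp x - 10 - 4 * (2 * exp x + 1) * x) s"
  proof (rule deriv_nonneg_imp_mono[where g' = "\<lambda>x. 4 * (exp x)^2 - 8 * x * exp x - 4" and g = "\<lambda>x. 2 * (exp x)^2 + 8 * exp x - 10 - 4 * (2 * exp x + 1) * x"])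
    fix z :: real assume "z \<in> {0..s}"
    show "((\<lambda>x. 2 * (exp x)^2 + 8 * exp x - 10 - 4 * (2 * exp x + 1) * x) has_real_derivative
           4 * (exp z)^2 - 8 * z * exp z - 4) (at z)"
      by (auto intro!: derivative_eq_intros simp: algebra_simps power2_eq_square)
    show "4 * (exp z)^2 - 8 * z * exp z - 4 \<ge> 0" using d1 \<open>z \<in> {0..s}\<close> by auto
  qed (use assms in auto)
  thus ?thesis by simp
qed

lemma R_pos:
  fixes s :: real assumes "s \<ge> 0"
  shows "exp s - 4 * s + 2 > 0"
proof -
  have "1 + s + s^2/2 + s^3/6 - 4 * s + 2 > 0"
  proof -
    have "s * (s - 3/2)^2 / 6 \<ge> 0" using assms by simp
    moreover have "s^2 - 27/8 * s + 3 > 0"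
    proof -
      have "(s - 27/16)^2 \<ge> 0" by simp
      thus ?thesis by (simp add: power2_eq_square algebra_simps)
    qed
    ultimately show ?thesis by (simp add: power2_eq_square power3_eq_cube algebra_simps)
  qed
  with exp_cubic_lower[OF assms] show ?thesis by linarith
qed

lemma psi_tau_le:
  fixes s :: real assumes "s \<ge> 0"
  shows "psi (tau s) \<le> psi s"
proof -
  define R where "R = (\<lambda>x::real. (exp x - 4 * x + 2) / 3)"
  have Rpos: "R x > 0" if "x \<ge> 0" for x using R_pos[OF that] by (simp add: R_def)
  have "(\<lambda>x. ln (R x) - tau x) 0 \<le> (\<lambda>x. ln (R x) - tau x) s"
  proof (rule deriv_nonneg_imp_mono[where g' = "\<lambda>x. (exp x - 4)/3 / R x + (1 + 2 * exp x) / 3" and g = "\<lambda>x. ln (R x) - tau x"])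
    fix z :: real assume z: "z \<in> {0..s}"
    hence Rz: "R z > 0" using Rpos by auto
    show "((\<lambda>x. ln (R x) - tau x) has_real_derivative (exp z - 4)/3 / R z + (1 + 2 * exp z) / 3) (at z)"
      unfolding R_def tau_def psi_def using Rz[unfolded R_def]
      by (auto intro!: derivative_eq_intros simp: field_simps)
    have "(exp z - 4)/3 / R z + (1 + 2 * exp z) / 3
          = (2 * (exp z)^2 + 8 * exp z - 10 - 4 * (2 * exp z + 1) * z) / (9 * R z)"
      using Rz by (simp add: R_def field_simps power2_eq_square)
    also have "\<dots> \<ge> 0" using r_nonneg[of z] z Rz by auto
    finally show "(exp z - 4)/3 / R z + (1 + 2 * exp z) / 3 \<ge> 0" .
  qed (use assms in auto)
  hence "tau s \<le> ln (R s)" by (simp add: R_def tau_def psi_def)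
  hence "exp (tau s) \<le> R s" using Rpos[OF assms] by (metis exp_le_cancel_iff exp_ln)
  moreover have "psi (tau s) = exp (tau s) - 1 - tau s" by (simp add: psi_def)
  moreover have "tau s = -s - 2/3*(exp s - 1 - s)" by (simp add: psi_def tau_def)
  ultimately show ?thesis unfolding psi_def R_def by argo
qed

lemma chi_density_times:
  fixes k :: nat and s :: real
  assumes "k \<ge> 1"
  defines "a \<equiv> real k / 2"
  shows "chi_squared_density k (real k * exp s) * (real k * exp s)
         = a powr a * exp (- a) / Gamma a * exp (- a * psi s)"
proof -
  have a: "a > 0" using assms by (simp add: a_def)
  have kk: "real k = 2 * a" by (simp add: a_def)
  have x: "real k * exp s > 0" using assms by simp
  have "chi_squared_density k (real k * exp s) * (real k * exp s)
      = (real k * exp s) powr (a - 1) * (real k * exp s) * exp (- (real k * exp s) / 2) / (2 powr a * Gamma a)"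
    using x by (simp add: chi_squared_density_def a_def)
  also have "(real k * exp s) powr (a - 1) * (real k * exp s) = (real k * exp s) powr a"
    using x by (simp add: powr_diff)
  also have "(real k * exp s) powr a = 2 powr a * a powr a * exp (a * s)"
    using a by (simp add: kk powr_mult powr_def exp_add[symmetric] algebra_simps ln_mult)
  finally have "chi_squared_density k (real k * exp s) * (real k * exp s)
     = 2 powr a * a powr a * exp (a * s) * exp (- (real k * exp s) / 2) / (2 powr a * Gamma a)" .
  also have "\<dots> = a powr a * (exp (a * s) * exp (- (real k * exp s) / 2)) / Gamma a"
    by (simp add: field_simps)
  also have "exp (a * s) * exp (- (real k * exp s) / 2) = exp (- a) * exp (- a * psi s)"
    by (simp add: kk psi_def exp_add[symmetric] algebra_simps)
  finally show ?thesis by (simp add: field_simps)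
qed

lemma psi_at_top: "filterlim psi at_top at_top"
proof (rule filterlim_at_top_mono[of "\<lambda>x. (- 1) + x"])
  show "filterlim (\<lambda>x::real. (- 1) + x) at_top at_top"
    by (rule filterlim_tendsto_add_at_top[OF tendsto_const filterlim_ident])
  show "\<forall>\<^sub>F x in at_top. (- 1) + x \<le> psi x"
  proof (rule eventually_at_top_linorderI[of 0])
    fix x :: real assume "0 \<le> x"
    from exp_lower_Taylor_quadratic[OF this] have "1 + x + x\<^sup>2 / 2 \<le> exp x" .
    moreover have "x\<^sup>2 / 2 \<ge> x - 1"
    proof -
      have "(x - 1)^2 \<ge> 0" by simp
      thus ?thesis by (simp add: power2_eq_square algebra_simps)
    qed
    ultimately show "(- 1) + x \<le> psi x" by (simp add: psi_def)
  qed
qed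

lemma exp_psi_lim:
  fixes a :: real assumes "a > 0"
  shows "((\<lambda>s. exp (- a * psi s)) \<longlongrightarrow> 0) at_top"
proof -
  have "filterlim (\<lambda>s. - a * psi s) at_bot at_top"
    using filterlim_tendsto_neg_mult_at_bot[OF tendsto_const _ psi_at_top, of "-a"] assms by simp
  from filterlim_compose[OF exp_at_bot this] show ?thesis .
qed

lemma median_bound:
  fixes F :: "real \<Rightarrow> real" and k :: nat
  assumes k: "k \<ge> 1"
    and deriv: "\<And>x. x > 0 \<Longrightarrow> (F has_real_derivative chi_squared_density k x) (at x)"
    and nonneg: "\<And>x. F x \<ge> 0"
    and lim: "(F \<longlongrightarrow> 1) at_top"
  shows "F (3 * (real k)^2 / (3 * real k + 2)) > 1/2"
proof -
  define a where "a = real k / 2"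
  have a: "a > 0" using k by (simp add: a_def)
  define C where "C = a powr a * exp (- a) / Gamma a"
  have C: "C > 0" using a Gamma_real_pos[OF a] by (simp add: C_def)
  define G where "G = (\<lambda>s. F (real k * exp s))"
  have Gd: "(G has_real_derivative C * exp (- a * psi s)) (at s)" for s
  proof -
    have "((\<lambda>s. F (real k * exp s)) has_real_derivative
           chi_squared_density k (real k * exp s) * (real k * exp s)) (at s)"
      using k by (auto intro!: DERIV_chain2[OF deriv] derivative_eq_intros)
    thus ?thesis using chi_density_times[OF k, of s] by (simp add: G_def C_def a_def)
  qed
  have Gd_chain: "((\<lambda>x. G (g x)) has_real_derivative C * exp (- a * psi (g x)) * g') (at x)"
    if "(g has_real_derivative g') (at x)" for g g' x
    using DERIV_chain2[OF Gd that] .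
  have psid: "(psi has_real_derivative (exp x - 1)) (at x)" for x
    unfolding psi_def[abs_def] by (auto intro!: derivative_eq_intros)
  have taud: "(tau has_real_derivative (- 1 - 2/3 * (exp x - 1))) (at x)" for x
    unfolding tau_def[abs_def] by (auto intro!: derivative_eq_intros psid)
  define \<Phi> where "\<Phi> = (\<lambda>s. 2 * G 0 - G (tau s) - G s - C * (2 / (3 * a)) * (1 - exp (- a * psi s)))"
  define \<Phi>' where "\<Phi>' = (\<lambda>s. C * (1 + 2/3 * (exp s - 1)) * (exp (- a * psi (tau s)) - exp (- a * psi s)))"
  have \<Phi>d: "(\<Phi> has_real_derivative \<Phi>' s) (at s)" for s
  proof -
    have "(\<Phi> has_real_derivative
       0 - C * exp (- a * psi (tau s)) * (- 1 - 2/3 * (exp s - 1)) - C * exp (- a * psi s)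
         - C * (2 / (3 * a)) * (0 - exp (- a * psi s) * (- a * (exp s - 1)))) (at s)"
      unfolding \<Phi>_def
      by (intro derivative_intros Gd_chain taud Gd DERIV_chain2[OF DERIV_exp] DERIV_cmult psid)
    moreover have "0 - C * exp (- a * psi (tau s)) * (- 1 - 2/3 * (exp s - 1)) - C * exp (- a * psi s)
         - C * (2 / (3 * a)) * (0 - exp (- a * psi s) * (- a * (exp s - 1))) = \<Phi>' s"
      using a by (simp add: \<Phi>'_def field_simps)
    ultimately show ?thesis by simp
  qed
  have \<Phi>0: "\<Phi> 0 = 0" by (simp add: \<Phi>_def tau_def psi_def)
  have \<Phi>pos: "\<Phi> s \<ge> 0" if "s \<ge> 0" for s
  proof -
    have "\<Phi> 0 \<le> \<Phi> s"
    proof (rule deriv_nonneg_imp_mono[where g = \<Phi> and g' = \<Phi>'])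
      fix z assume z: "z \<in> {0..s}"
      show "(\<Phi> has_real_derivative \<Phi>' z) (at z)" by (rule \<Phi>d)
      have "psi (tau z) \<le> psi z" using psi_tau_le z by auto
      hence "exp (- a * psi (tau z)) \<ge> exp (- a * psi z)" using a by (simp add: mult_left_mono)
      moreover have "1 + 2/3 * (exp z - 1) > 0"
      proof -
        have "1 + 2/3 * (exp z - 1) = 1/3 + 2/3 * exp z" by (simp add: field_simps)
        thus ?thesis using exp_gt_zero[of z] by linarith
      qed
      ultimately show "\<Phi>' z \<ge> 0" unfolding \<Phi>'_def using C by (intro mult_nonneg_nonneg) auto
    qed (use that in auto)
    thus ?thesis using \<Phi>0 by simp
  qed
  have ineq: "2 * G 0 - G s \<ge> C * (2 / (3 * a)) * (1 - exp (- a * psi s))" if "s \<ge> 0" for s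
    using \<Phi>pos[OF that] nonneg[of "real k * exp (tau s)"] by (simp add: \<Phi>_def G_def)
  have Glim: "(G \<longlongrightarrow> 1) at_top"
  proof -
    have "filterlim (\<lambda>s. real k * exp s) at_top at_top"
      using k by (intro filterlim_tendsto_pos_mult_at_top[OF tendsto_const _ exp_at_top]) auto
    from filterlim_compose[OF lim this] show ?thesis by (simp add: G_def o_def)
  qed
  have "C * (2 / (3 * a)) * (1 - 0) \<le> 2 * G 0 - 1"
  proof (rule tendsto_le[OF trivial_limit_at_top_linorder])
    show "((\<lambda>s. 2 * G 0 - G s) \<longlongrightarrow> 2 * G 0 - 1) at_top"
      by (intro tendsto_intros Glim)
    show "((\<lambda>s. C * (2 / (3 * a)) * (1 - exp (- a * psi s))) \<longlongrightarrow> C * (2 / (3 * a)) * (1 - 0)) at_top"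
      by (intro tendsto_intros exp_psi_lim a)
    show "\<forall>\<^sub>F s in at_top. C * (2 / (3 * a)) * (1 - exp (- a * psi s)) \<le> 2 * G 0 - G s"
      by (rule eventually_at_top_linorderI[of 0]) (rule ineq)
  qed
  hence G0: "G 0 \<ge> 1/2 + C / (3 * a)" by simp
  define s0 where "s0 = ln (3 * real k / (3 * real k + 2))"
  have s0neg: "s0 \<le> 0" using k by (simp add: s0_def)
  have "C * s0 - G s0 \<le> C * 0 - G 0"
  proof (rule deriv_nonneg_imp_mono[where g = "\<lambda>s. C * s - G s" and g' = "\<lambda>s. C - C * exp (- a * psi s)"])
    fix z assume "z \<in> {s0..0}"
    show "((\<lambda>s. C * s - G s) has_real_derivative C - C * exp (- a * psi z)) (at z)"
      by (auto intro!: derivative_eq_intros Gd)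
    have "exp (- a * psi z) \<le> 1" using a psi_nonneg[of z] by (simp add: mult_nonneg_nonneg)
    thus "C - C * exp (- a * psi z) \<ge> 0" using C by (simp add: algebra_simps)
  qed (use s0neg in auto)
  hence G1: "G s0 \<ge> G 0 + C * s0" by simp
  have "- s0 = ln (1 + 1 / (3 * a))"
  proof -
    have "- s0 = ln ((3 * real k + 2) / (3 * real k))"
      using k by (simp add: s0_def ln_div)
    also have "(3 * real k + 2) / (3 * real k) = 1 + 1 / (3 * a)"
      using k by (simp add: a_def field_simps)
    finally show ?thesis .
  qed
  hence "- s0 < 1 / (3 * a)" using ln_add_one_self_less_self[of "1 / (3 * a)"] a by simp
  hence "C * (- s0) < C * (1 / (3 * a))" using C by (intro mult_strict_left_mono) auto
  hence "G s0 > 1/2" using G0 G1 by simp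
  moreover have "real k * exp s0 = 3 * (real k)^2 / (3 * real k + 2)"
    using k by (simp add: s0_def power2_eq_square)
  ultimately show ?thesis by (simp add: G_def)
qed

lemma chi_density_nonneg: "chi_squared_density k x \<ge> 0"
proof -
  have "Gamma (real k / 2) \<ge> 0"
  proof (cases "k = 0")
    case True thus ?thesis by simp
  next
    case False thus ?thesis using Gamma_real_pos[of "real k / 2"] by simp
  qed
  thus ?thesis by (simp add: chi_squared_density_def)
qed

lemma chi_density_measurable[measurable]: "chi_squared_density k \<in> borel_measurable borel"
  unfolding chi_squared_density_def[abs_def] by measurable

lemma chi_density_pointwise:
  fixes m n :: nat and x t :: real
  assumes m: "m \<ge> 1" and n: "n \<ge> 1" and x: "x > 0"
  defines "a \<equiv> real m / 2" and "b \<equiv> real n / 2"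
  shows "chi_squared_density m (x - x * t) * chi_squared_density n (x * t)
       = x powr (a + b - 2) * exp (- x / 2) / (2 powr a * Gamma a * (2 powr b * Gamma b))
         * (t powr (b - 1) * (1 - t) powr (a - 1) * indicator {0..1} t)"
proof -
  consider "t \<le> 0" | "t \<ge> 1" | "0 < t \<and> t < 1" by linarith
  thus ?thesis
  proof cases
    case 1
    hence "x * t \<le> 0" using x by (simp add: mult_nonneg_nonpos)
    hence "chi_squared_density n (x * t) = 0" by (simp add: chi_squared_density_def)
    moreover have "t powr (b - 1) * (1 - t) powr (a - 1) * indicator {0..1} t = 0"
      using 1 by (cases "t = 0") (auto simp: indicator_def)
    ultimately show ?thesis by (simp only: mult_zero_right mult_zero_left)
  next
    case 2
    hence "x - x * t \<le> 0" using x by (simp add: algebra_simps mult_le_cancel_left1)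
    hence "chi_squared_density m (x - x * t) = 0" by (simp add: chi_squared_density_def)
    moreover have "t powr (b - 1) * (1 - t) powr (a - 1) * indicator {0..1} t = 0"
      using 2 by (cases "t = 1") (auto simp: indicator_def)
    ultimately show ?thesis by (simp only: mult_zero_right mult_zero_left)
  next
    case 3
    have p1: "x - x * t > 0" using 3 x by (simp add: algebra_simps)
    have p2: "x * t > 0" using 3 x by simp
    have e1: "x - x * t = x * (1 - t)" by (simp add: algebra_simps)
    have "chi_squared_density m (x - x * t) * chi_squared_density n (x * t)
        = ((x * (1 - t)) powr (a - 1) * exp (- (x * (1 - t)) / 2) / (2 powr a * Gamma a)) *
          ((x * t) powr (b - 1) * exp (- (x * t) / 2) / (2 powr b * Gamma b))"
      using p1 p2 by (simp add: chi_squared_density_def a_def b_def e1)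
    also have "\<dots> = (x powr (a - 1) * x powr (b - 1)) * (exp (- (x * (1 - t)) / 2) * exp (- (x * t) / 2))
                   / (2 powr a * Gamma a * (2 powr b * Gamma b)) * (t powr (b - 1) * (1 - t) powr (a - 1))"
      using 3 x by (simp add: powr_mult[of x "1 - t"] powr_mult[of x t])
    also have "x powr (a - 1) * x powr (b - 1) = x powr (a + b - 2)"
      by (simp add: powr_add[symmetric])
    also have "exp (- (x * (1 - t)) / 2) * exp (- (x * t) / 2) = exp (- (x * (1 - t)) / 2 + - (x * t) / 2)"
      by (rule exp_add[symmetric])
    also have "- (x * (1 - t)) / 2 + - (x * t) / 2 = - x / 2" by (simp add: right_diff_distrib diff_divide_distrib)
    finally show ?thesis using 3 by simp
  qed
qed

lemma chi_convolution:
  fixes m n :: nat and x :: real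
  assumes m: "m \<ge> 1" and n: "n \<ge> 1"
  shows "(\<integral>\<^sup>+y. ennreal (chi_squared_density m (x - y)) * ennreal (chi_squared_density n y) \<partial>lborel)
       = ennreal (chi_squared_density (m + n) x)"
proof (cases "x > 0")
  case False
  have z: "ennreal (chi_squared_density m (x - y)) * ennreal (chi_squared_density n y) = 0" for y
    using False by (cases "y > 0") (auto simp: chi_squared_density_def)
  have "chi_squared_density (m + n) x = 0" using False by (simp add: chi_squared_density_def)
  thus ?thesis by (simp add: z)
next
  case True
  note x = True
  define a where "a = real m / 2"
  define b where "b = real n / 2"
  have a: "a > 0" and b: "b > 0" using m n by (auto simp: a_def b_def)
  define K where "K = x powr (a + b - 2) * exp (- x / 2) / (2 powr a * Gamma a * (2 powr b * Gamma b))"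
  have K: "K \<ge> 0" using a b Gamma_real_pos[OF a] Gamma_real_pos[OF b] by (simp add: K_def)
  have "(\<integral>\<^sup>+y. ennreal (chi_squared_density m (x - y)) * ennreal (chi_squared_density n y) \<partial>lborel)
      = (\<integral>\<^sup>+y. ennreal (chi_squared_density m (x - y) * chi_squared_density n y) \<partial>lborel)"
    by (intro nn_integral_cong) (simp add: ennreal_mult chi_density_nonneg)
  also have "\<dots> = ennreal \<bar>x\<bar> * (\<integral>\<^sup>+t. ennreal (chi_squared_density m (x - (0 + x * t)) * chi_squared_density n (0 + x * t)) \<partial>lborel)"
    by (rule nn_integral_real_affine) (use x in auto)
  also have "(\<integral>\<^sup>+t. ennreal (chi_squared_density m (x - (0 + x * t)) * chi_squared_density n (0 + x * t)) \<partial>lborel)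
      = (\<integral>\<^sup>+t. ennreal K * (ennreal (t powr (b - 1) * (1 - t) powr (a - 1)) * indicator {0..1} t) \<partial>lborel)"
  proof (rule nn_integral_cong)
    fix t :: real
    have "ennreal (K * (t powr (b - 1) * (1 - t) powr (a - 1) * indicator {0..1} t))
        = ennreal K * (ennreal (t powr (b - 1) * (1 - t) powr (a - 1)) * indicator {0..1} t)"
      using K by (simp add: ennreal_mult indicator_def)
    thus "ennreal (chi_squared_density m (x - (0 + x * t)) * chi_squared_density n (0 + x * t))
        = ennreal K * (ennreal (t powr (b - 1) * (1 - t) powr (a - 1)) * indicator {0..1} t)"
      using chi_density_pointwise[OF m n x, of t] by (simp add: K_def a_def b_def)
  qed
  also have "\<dots> = ennreal K * (\<integral>\<^sup>+t. ennreal (t powr (b - 1) * (1 - t) powr (a - 1)) * indicator {0..1} t \<partial>lborel)"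
    by (rule nn_integral_cmult) measurable
  also have "(\<integral>\<^sup>+t. ennreal (t powr (b - 1) * (1 - t) powr (a - 1)) * indicator {0..1} t \<partial>lborel) = ennreal (Beta b a)"
    by (rule nn_integral_has_integral_lebesgue'[OF _ has_integral_Beta_real[OF b a]]) simp
  finally have eq0: "(\<integral>\<^sup>+y. ennreal (chi_squared_density m (x - y)) * ennreal (chi_squared_density n y) \<partial>lborel)
       = ennreal \<bar>x\<bar> * (ennreal K * ennreal (Beta b a))" .
  have eq: "(\<integral>\<^sup>+y. ennreal (chi_squared_density m (x - y)) * ennreal (chi_squared_density n y) \<partial>lborel)
       = ennreal (x * K * Beta b a)"
  proof -
    have "Beta b a \<ge> 0" using a b Gamma_real_pos[OF a] Gamma_real_pos[OF b] Gamma_real_pos[of "b + a"]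
      by (simp add: Beta_def)
    thus ?thesis using x K eq0 by (simp add: ennreal_mult mult.assoc)
  qed
  have "x * K * Beta b a = chi_squared_density (m + n) x"
  proof -
    have gab: "Gamma a > 0" "Gamma b > 0" "Gamma (a + b) > 0" using a b by (auto intro: Gamma_real_pos)
    have ab: "(real m + real n) / 2 = a + b" by (simp add: a_def b_def add_divide_distrib)
    have "x * K * Beta b a = (x * x powr (a + b - 2)) * exp (- x / 2) / (2 powr a * 2 powr b * Gamma (a + b))"
      using gab by (simp add: K_def Beta_def field_simps add.commute[of b a])
    also have "x * x powr (a + b - 2) = x powr (a + b - 1)"
      using x by (simp add: powr_add[symmetric] powr_diff power2_eq_square)
    also have "2 powr a * 2 powr b = (2::real) powr (a + b)" by (simp add: powr_add)
    finally show ?thesis using x by (simp add: chi_squared_density_def ab)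
  qed
  with eq show ?thesis by simp
qed

lemma chi1_at_sq:
  fixes v :: real assumes "v > 0"
  shows "chi_squared_density 1 (v\<^sup>2) * (2 * v) = 2 * std_normal_density v"
proof -
  have "(v\<^sup>2) powr (1/2 - 1) = 1 / v"
    using assms by (simp add: powr_minus_divide powr_half_sqrt[symmetric]) 
  moreover have "(2::real) powr (1/2) = sqrt 2" by (simp add: powr_half_sqrt)
  ultimately show ?thesis using assms
    by (simp add: chi_squared_density_def std_normal_density_def Gamma_one_half_real real_sqrt_mult field_simps)
qed

lemma chi1_nn_integral:
  fixes r :: real assumes r: "r \<ge> 0"
  shows "(\<integral>\<^sup>+x. ennreal (chi_squared_density 1 x) * indicator {..r\<^sup>2} x \<partial>lborel)
       = 2 * (\<integral>\<^sup>+x. ennreal (std_normal_density x) * indicator {0<..r} x \<partial>lborel)"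
proof -
  have "(\<integral>\<^sup>+x. ennreal (chi_squared_density 1 x) * indicator {..r\<^sup>2} x \<partial>lborel)
      = (\<integral>\<^sup>+x. ennreal (chi_squared_density 1 x * indicator {(\<lambda>v. v\<^sup>2) 0..(\<lambda>v. v\<^sup>2) r} x) \<partial>lborel)"
    by (intro nn_integral_cong) (auto simp: indicator_def chi_squared_density_def)
  also have "\<dots> = (\<integral>\<^sup>+v. ennreal (chi_squared_density 1 ((\<lambda>v. v\<^sup>2) v) * (2 * v) * indicator {0..r} v) \<partial>lborel)"
    by (rule nn_integral_substitution[where g' = "\<lambda>v. 2 * v"])
       (auto intro!: derivative_eq_intros continuous_intros simp: r set_borel_measurable_def)
  also have "\<dots> = (\<integral>\<^sup>+v. 2 * (ennreal (std_normal_density v) * indicator {0<..r} v) \<partial>lborel)"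
  proof (rule nn_integral_cong)
    fix v :: real
    show "ennreal (chi_squared_density 1 ((\<lambda>v. v\<^sup>2) v) * (2 * v) * indicator {0..r} v)
        = 2 * (ennreal (std_normal_density v) * indicator {0<..r} v)"
    proof (cases "v > 0")
      case True
      have "ennreal (chi_squared_density 1 (v\<^sup>2) * (2 * v)) = ennreal (2 * std_normal_density v)"
        by (simp only: chi1_at_sq[OF True])
      also have "\<dots> = 2 * ennreal (std_normal_density v)" by (simp add: ennreal_mult)
      finally show ?thesis using True by (simp add: indicator_def)
    next
      case False
      thus ?thesis by (auto simp: indicator_def)
    qed
  qed
  also have "\<dots> = 2 * (\<integral>\<^sup>+v. ennreal (std_normal_density v) * indicator {0<..r} v \<partial>lborel)"
    by (rule nn_integral_cmult) measurable
  finally show ?thesis .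
qed

lemma std_normal_sym:
  fixes r :: real assumes r: "r \<ge> 0"
  shows "(\<integral>\<^sup>+x. ennreal (std_normal_density x) * indicator {-r..r} x \<partial>lborel)
       = 2 * (\<integral>\<^sup>+x. ennreal (std_normal_density x) * indicator {0<..r} x \<partial>lborel)"
proof -
  let ?\<phi> = "\<lambda>x. ennreal (std_normal_density x)"
  have "(\<integral>\<^sup>+x. ?\<phi> x * indicator {-r..r} x \<partial>lborel)
      = (\<integral>\<^sup>+x. ?\<phi> x * indicator {-r..0} x + ?\<phi> x * indicator {0<..r} x \<partial>lborel)"
    by (intro nn_integral_cong) (auto simp: indicator_def)
  also have "\<dots> = (\<integral>\<^sup>+x. ?\<phi> x * indicator {-r..0} x \<partial>lborel) + (\<integral>\<^sup>+x. ?\<phi> x * indicator {0<..r} x \<partial>lborel)"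
    by (rule nn_integral_add) measurable
  also have "(\<integral>\<^sup>+x. ?\<phi> x * indicator {-r..0} x \<partial>lborel)
      = ennreal \<bar>- 1\<bar> * (\<integral>\<^sup>+x. ?\<phi> (0 + (- 1) * x) * indicator {-r..0} (0 + (- 1) * x) \<partial>lborel)"
    by (rule nn_integral_real_affine) auto
  also have "\<dots> = (\<integral>\<^sup>+x. ?\<phi> x * indicator {0..r} x \<partial>lborel)"
    by (simp add: std_normal_density_def indicator_def conj_commute)
  also have "\<dots> = (\<integral>\<^sup>+x. ?\<phi> x * indicator {0<..r} x \<partial>lborel)"
    by (intro nn_integral_cong_AE) (use AE_lborel_singleton[of 0] in \<open>auto elim!: eventually_mono simp: indicator_def\<close>)
  finally show ?thesis by (simp add: mult_2)
qed

lemma (in prob_space) std_normal_sq_chi1: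
  assumes Z: "distributed M lborel Z std_normal_density"
  shows "distributed M lborel (\<lambda>\<omega>. (Z \<omega>)\<^sup>2) (chi_squared_density 1)"
proof (rule distributedI_borel_atMost[where g = "\<lambda>a. measure M {x\<in>space M. (Z x)\<^sup>2 \<le> a}"])
  have Zm[measurable]: "Z \<in> borel_measurable M" using distributed_measurable[OF Z] by simp
  show "(\<lambda>\<omega>. (Z \<omega>)\<^sup>2) \<in> borel_measurable M" by measurable
  show "chi_squared_density 1 \<in> borel_measurable borel" by measurable
  show "AE x in lborel. 0 \<le> chi_squared_density 1 x" by (simp add: chi_density_nonneg)
  fix a :: real
  show "emeasure M {x\<in>space M. (Z x)\<^sup>2 \<le> a} = ennreal (measure M {x\<in>space M. (Z x)\<^sup>2 \<le> a})"
    by (simp add: emeasure_eq_measure)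
  have "(\<integral>\<^sup>+x. ennreal (chi_squared_density 1 x) * indicator {..a} x \<partial>lborel) = emeasure M {x\<in>space M. (Z x)\<^sup>2 \<le> a}"
  proof (cases "a \<ge> 0")
    case False
    have e1: "{x\<in>space M. (Z x)\<^sup>2 \<le> a} = {}" using False by (auto simp: not_le intro: less_le_trans)
    have z: "ennreal (chi_squared_density 1 x) * indicator {..a} x = 0" for x
      using False by (auto simp: indicator_def chi_squared_density_def)
    have "(\<integral>\<^sup>+x. ennreal (chi_squared_density 1 x) * indicator {..a} x \<partial>lborel) = 0"
      by (simp only: z) simp
    thus ?thesis by (simp add: e1)
  next
    case True
    define r where "r = sqrt a"
    have r: "r \<ge> 0" and ar: "a = r\<^sup>2" using True by (auto simp: r_def)
    have "{x\<in>space M. (Z x)\<^sup>2 \<le> a} = Z -` {-r..r} \<inter> space M"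
      using r by (auto simp: ar abs_le_square_iff[symmetric] abs_le_iff)
    hence "emeasure M {x\<in>space M. (Z x)\<^sup>2 \<le> a} = (\<integral>\<^sup>+x. ennreal (std_normal_density x) * indicator {-r..r} x \<partial>lborel)"
      using distributed_emeasure[OF Z, of "{-r..r}"] by simp
    thus ?thesis using chi1_nn_integral[OF r] std_normal_sym[OF r] by (simp add: ar)
  qed
  moreover have "(\<integral>\<^sup>+x. ennreal (chi_squared_density 1 x * indicator {..a} x) \<partial>lborel)
     = (\<integral>\<^sup>+x. ennreal (chi_squared_density 1 x) * indicator {..a} x \<partial>lborel)"
    by (intro nn_integral_cong) (simp add: indicator_def)
  ultimately show "(\<integral>\<^sup>+x. ennreal (chi_squared_density 1 x * indicator {..a} x) \<partial>lborel) = ennreal (measure M {x\<in>space M. (Z x)\<^sup>2 \<le> a})"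
    by (simp add: emeasure_eq_measure)
qed

lemma (in prob_space) sum_chi1:
  assumes finI: "finite I" and ne: "I \<noteq> {}"
    and X: "\<And>i. i \<in> I \<Longrightarrow> distributed M lborel (X i) (chi_squared_density 1)"
    and ind: "indep_vars (\<lambda>i. borel) X I"
  shows "distributed M lborel (\<lambda>x. \<Sum>i\<in>I. X i x) (chi_squared_density (card I))"
  using finI ne X ind
proof (induct rule: finite_ne_induct)
  case (singleton i) then show ?case by auto
next
  case (insert i I)
  have ind1: "indep_var borel (X i) borel (\<lambda>x. \<Sum>j\<in>I. X j x)"
    using insert by (intro indep_vars_sum) (auto intro!: indep_vars_subset)
  have d1: "distributed M lborel (X i) (chi_squared_density 1)" using insert by auto
  have d2: "distributed M lborel (\<lambda>x. \<Sum>j\<in>I. X j x) (chi_squared_density (card I))"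
    using insert by (auto intro!: insert.hyps(4) indep_vars_subset[OF insert.prems(2)])
  have "distributed M lborel (\<lambda>x. X i x + (\<Sum>j\<in>I. X j x))
     (\<lambda>x. \<integral>\<^sup>+y. ennreal (chi_squared_density 1 (x - y)) * ennreal (chi_squared_density (card I) y) \<partial>lborel)"
    by (rule distributed_convolution[OF ind1 d1 d2])
  also have "(\<lambda>x. \<integral>\<^sup>+y. ennreal (chi_squared_density 1 (x - y)) * ennreal (chi_squared_density (card I) y) \<partial>lborel)
      = (\<lambda>x. ennreal (chi_squared_density (1 + card I) x))"
    using insert by (intro ext chi_convolution) (auto simp: Suc_le_eq card_gt_0_iff)
  also have "(\<lambda>x. X i x + (\<Sum>j\<in>I. X j x)) = (\<lambda>x. \<Sum>j\<in>insert i I. X j x)"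
    using insert by auto
  also have "1 + card I = card (insert i I)" using insert by simp
  finally show ?case .
qed

lemma chi_density_cont:
  assumes "c > 0"
  shows "continuous_on {c..u} (chi_squared_density k)"
proof -
  define D where "D = 2 powr (real k / 2) * Gamma (real k / 2)"
  have cc: "continuous_on {c..u} (\<lambda>y. y powr (real k / 2 - 1) * exp (- y / 2))"
    using assms by (intro continuous_intros) auto
  have cd: "continuous_on {c..u} (\<lambda>y. y powr (real k / 2 - 1) * exp (- y / 2) / D)"
  proof (cases "D = 0")
    case True thus ?thesis by simp
  next
    case False thus ?thesis by (intro continuous_on_divide cc continuous_on_const) auto
  qed
  have eq: "\<And>y. y \<in> {c..u} \<Longrightarrow> y powr (real k / 2 - 1) * exp (- y / 2) / D = chi_squared_density k y"
    using assms unfolding chi_squared_density_def D_def by auto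
  show ?thesis by (rule continuous_on_eq[OF cd eq])
qed

lemma chi_cdf_deriv:
  assumes P: "prob_space (chi_squared k)" and x: "x > 0"
  shows "(chi_squared_cdf k has_real_derivative chi_squared_density k x) (at x)"
proof -
  interpret P: prob_space "chi_squared k" by (rule P)
  have sets[simp]: "sets (chi_squared k) = sets borel" by (simp add: chi_squared_def)
  define c where "c = x / 2"
  have c: "c > 0" "c < x" using x by (auto simp: c_def)
  have meas: "measure (chi_squared k) {c..u} = integral {c..u} (chi_squared_density k)" if "u \<ge> c" for u
  proof -
    have I: "(chi_squared_density k has_integral integral {c..u} (chi_squared_density k)) {c..u}"
      by (rule integrable_integral[OF integrable_continuous_interval[OF chi_density_cont[OF c(1)]]])
    have "emeasure (chi_squared k) {c..u} = (\<integral>\<^sup>+y. ennreal (chi_squared_density k y) * indicator {c..u} y \<partial>lborel)"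
      by (simp add: chi_squared_def emeasure_density)
    also have "\<dots> = ennreal (integral {c..u} (chi_squared_density k))"
      by (rule nn_integral_has_integral_lebesgue'[OF _ I]) (simp add: chi_density_nonneg)
    moreover have "integral {c..u} (chi_squared_density k) \<ge> 0"
      by (rule integral_nonneg[OF integrable_continuous_interval[OF chi_density_cont[OF c(1)]]])
         (simp add: chi_density_nonneg)
    ultimately show ?thesis
      by (simp add: P.emeasure_eq_measure)
  qed
  have eqF: "chi_squared_cdf k u = P.prob {..<c} + integral {c..u} (chi_squared_density k)" if "u \<ge> c" for u
  proof -
    have "{..u} = {..<c} \<union> {c..u}" using that by auto
    hence "chi_squared_cdf k u = P.prob ({..<c} \<union> {c..u})" by (simp add: chi_squared_cdf_def)
    also have "\<dots> = P.prob {..<c} + P.prob {c..u}" by (rule P.finite_measure_Union) auto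
    finally show ?thesis using meas[OF that] by simp
  qed
  have "((\<lambda>u. P.prob {..<c} + integral {c..u} (chi_squared_density k)) has_real_derivative chi_squared_density k x) (at x within {c..2*x})"
  proof -
    have "(chi_squared_density k) x = chi_squared_density k x" ..
    have "((\<lambda>u. integral {c..u} (chi_squared_density k)) has_real_derivative chi_squared_density k x) (at x within {c..2*x})"
      by (rule integral_has_real_derivative[OF chi_density_cont[OF c(1)]]) (use c x in simp)
    from DERIV_add[OF DERIV_const this] show ?thesis by simp
  qed
  hence d: "((\<lambda>u. P.prob {..<c} + integral {c..u} (chi_squared_density k)) has_real_derivative chi_squared_density k x) (at x)"
    using c x by (simp add: at_within_Icc_at)
  show ?thesis
  proof (rule has_field_derivative_transform_within_open[OF d, of "{c<..<2*x}"])
    show "open {c<..<2*x}" by simp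
    show "x \<in> {c<..<2*x}" using c x by simp
    fix u assume "u \<in> {c<..<2*x}"
    thus "P.prob {..<c} + integral {c..u} (chi_squared_density k) = chi_squared_cdf k u"
      using eqF[of u] by simp
  qed
qed

theorem mainTheorem4:
  fixes M :: "'a measure" and k :: nat and V A :: real
    and y :: "nat \<Rightarrow> 'a \<Rightarrow> real" and \<mu> :: "nat \<Rightarrow> real"
  assumes "prob_space M"
    and "k \<ge> 1" and "V > 0" and "0 \<le> A" and "A \<le> 2 * V / (3 * real k)"
    and "prob_space.indep_vars M (\<lambda>_. borel) y {1..k}"
    and "\<And>i. i \<in> {1..k} \<Longrightarrow> distributed M lborel (y i) (normal_density (\<mu> i) (sqrt (V + A)))"
  shows "measure M {\<omega> \<in> space M. (\<Sum>i=1..k. (y i \<omega> - \<mu> i)\<^sup>2) / real k - V < 0}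
           = chi_squared_cdf k (real k * (V / (V + A)))
       \<and> chi_squared_cdf k (real k * (V / (V + A))) > 1 / 2"
proof -
  interpret P: prob_space M by (rule assms(1))
  have k: "k \<ge> 1" and V: "V > 0" and A: "A \<ge> 0" using assms by auto
  define \<sigma> where "\<sigma> = sqrt (V + A)"
  have VA: "V + A > 0" using V A by simp
  have \<sigma>: "\<sigma> > 0" using VA by (simp add: \<sigma>_def)
  have \<sigma>2: "\<sigma>\<^sup>2 = V + A" using VA by (simp add: \<sigma>_def)
  define W where "W = (\<lambda>i \<omega>. ((y i \<omega> - \<mu> i) / \<sigma>)\<^sup>2)"
  have Wd: "distributed M lborel (W i) (chi_squared_density 1)" if "i \<in> {1..k}" for i
  proof -
    have "distributed M lborel (\<lambda>\<omega>. (y i \<omega> - \<mu> i) / \<sigma>) std_normal_density"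
      using assms(7)[OF that] P.normal_standard_normal_convert[OF \<sigma>] by (simp add: \<sigma>_def)
    from P.std_normal_sq_chi1[OF this] show ?thesis by (simp add: W_def)
  qed
  have Wind: "P.indep_vars (\<lambda>_. borel) W {1..k}"
    unfolding W_def by (rule P.indep_vars_compose2[OF assms(6)]) measurable
  define S where "S = (\<lambda>\<omega>. \<Sum>i\<in>{1..k}. W i \<omega>)"
  have Sd: "distributed M lborel S (chi_squared_density k)"
    using P.sum_chi1[OF _ _ Wd Wind] k by (simp add: S_def)
  have Sm[measurable]: "S \<in> borel_measurable M" using distributed_measurable[OF Sd] by simp
  have chi_eq: "chi_squared k = distr M lborel S"
    using distributed_distr_eq_density[OF Sd] by (simp add: chi_squared_def)
  have Pchi: "prob_space (chi_squared k)"
    unfolding chi_eq by (rule P.prob_space_distr) simp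
  interpret C: prob_space "chi_squared k" by (rule Pchi)
  have RD: "real_distribution (chi_squared k)"
    unfolding real_distribution_def real_distribution_axioms_def using Pchi by (simp add: chi_squared_def)
  define t where "t = real k * (V / (V + A))"
  have set_eq: "{\<omega> \<in> space M. (\<Sum>i=1..k. (y i \<omega> - \<mu> i)\<^sup>2) / real k - V < 0} = S -` {..<t} \<inter> space M"
  proof -
    have "(\<Sum>i=1..k. (y i \<omega> - \<mu> i)\<^sup>2) = \<sigma>\<^sup>2 * S \<omega>" for \<omega>
      using \<sigma> by (simp add: S_def W_def sum_distrib_left power_divide)
    moreover have "(\<sigma>\<^sup>2 * s / real k - V < 0) \<longleftrightarrow> s < t" for s
      using k VA by (simp add: \<sigma>2 t_def field_simps)
    ultimately show ?thesis by auto
  qed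
  have "emeasure M (S -` {..<t} \<inter> space M) = (\<integral>\<^sup>+x. ennreal (chi_squared_density k x) * indicator {..<t} x \<partial>lborel)"
    by (rule distributed_emeasure[OF Sd]) simp
  also have "\<dots> = (\<integral>\<^sup>+x. ennreal (chi_squared_density k x) * indicator {..t} x \<partial>lborel)"
    by (intro nn_integral_cong_AE) (use AE_lborel_singleton[of t] in \<open>auto elim!: eventually_mono simp: indicator_def\<close>)
  also have "\<dots> = emeasure (chi_squared k) {..t}"
    by (simp add: chi_squared_def emeasure_density)
  finally have "measure M (S -` {..<t} \<inter> space M) = measure (chi_squared k) {..t}"
    by (simp add: measure_def)
  hence part1: "measure M {\<omega> \<in> space M. (\<Sum>i=1..k. (y i \<omega> - \<mu> i)\<^sup>2) / real k - V < 0} = chi_squared_cdf k t"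
    unfolding set_eq chi_squared_cdf_def .
  define t0 where "t0 = 3 * (real k)^2 / (3 * real k + 2)"
  have "chi_squared_cdf k t0 > 1/2"
    unfolding t0_def
  proof (rule median_bound[OF k])
    show "\<And>x. 0 < x \<Longrightarrow> (chi_squared_cdf k has_real_derivative chi_squared_density k x) (at x)"
      by (rule chi_cdf_deriv[OF Pchi])
    show "\<And>x. 0 \<le> chi_squared_cdf k x" by (simp add: chi_squared_cdf_def)
    show "(chi_squared_cdf k \<longlongrightarrow> 1) at_top"
      using real_distribution.cdf_lim_at_top_prob[OF RD] by (simp add: cdf_def[abs_def] chi_squared_cdf_def[abs_def])
  qed
  moreover have "t0 \<le> t"
  proof -
    have "3 * real k * A \<le> 2 * V" using assms(5) k by (simp add: field_simps)
    hence "3 * real k * (V + A) \<le> V * (3 * real k + 2)" by (simp add: algebra_simps)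
    hence "3 * real k / (3 * real k + 2) \<le> V / (V + A)"
      using VA k by (simp add: divide_simps)
    hence "real k * (3 * real k / (3 * real k + 2)) \<le> real k * (V / (V + A))"
      by (intro mult_left_mono) auto
    thus ?thesis by (simp add: t0_def t_def power2_eq_square mult.assoc mult.left_commute)
  qed
  hence "chi_squared_cdf k t0 \<le> chi_squared_cdf k t"
    unfolding chi_squared_cdf_def by (intro C.finite_measure_mono) (auto simp: chi_squared_def)
  ultimately show ?thesis using part1 by (simp add: t_def)
qed

end
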